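(* Let $a$ be a positive integer and $N>0$. Then \[ \mathcal{E}_a(N)=\bigcup_{d\mid a}\{\,d\,n':\ n'\in\mathcal{E}^*_{a/d}(N/d)\,\} \] (the union over positive divisors $d$ of $a$), and consequently \[ E_a(N)=\sum_{d\mid a}E^*_{a/d}(N/d). \]
   Context: For a positive integer $b$ and a positive integer $n$, let $R(n;b)$ denote the number of pairs $(x,y)$ of positive integers with $\frac{b}{n}=\frac1x+\frac1y$. Let $\mathcal{E}_b=\{n\in\mathbb{N}: R(n;b)=0\}$ and $\mathcal{E}^*_b=\{n\in\mathcal{E}_b:\gcd(n,b)=1\}$. For real $x>0$ let $\mathcal{E}_b(x)=\{n\in\mathcal{E}_b:n\le x\}$, $\mathcal{E}^*_b(x)=\{n\in\mathcal{E}^*_b:n\le x\}$, $E_b(x)=\#\mathcal{E}_b(x)$ and $E^*_b(x)=\#\mathcal{E}^*_b(x)$. *)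

theory Defs
  imports "HOL-Analysis.Analysis"
begin

definition R :: "nat \<Rightarrow> nat \<Rightarrow> nat" where
  "R n b = card {(x::nat, y::nat). x > 0 \<and> y > 0 \<and>
      real b / real n = 1 / real x + 1 / real y}"

definition ExcSet :: "nat \<Rightarrow> nat set" where
  "ExcSet b = {n::nat. n > 0 \<and> R n b = 0}"

definition ExcSetStar :: "nat \<Rightarrow> nat set" where
  "ExcSetStar b = {n \<in> ExcSet b. coprime n b}"

definition ExcUpto :: "nat \<Rightarrow> real \<Rightarrow> nat set" where
  "ExcUpto b x = {n \<in> ExcSet b. real n \<le> x}"

definition ExcStarUpto :: "nat \<Rightarrow> real \<Rightarrow> nat set" where
  "ExcStarUpto b x = {n \<in> ExcSetStar b. real n \<le> x}"

definition E :: "nat \<Rightarrow> real \<Rightarrow> nat" where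
  "E b x = card (ExcUpto b x)"

definition EStar :: "nat \<Rightarrow> real \<Rightarrow> nat" where
  "EStar b x = card (ExcStarUpto b x)"

end

theory Submission
  imports Defs
begin

lemma R_scale:
  assumes "d > 0" "d dvd a"
  shows "R (d * n) a = R n (a div d)"
proof -
  have "real a / real (d * n) = real (a div d) / real n"
  proof -
    have a: "a = d * (a div d)" using assms by simp
    have "real a / real (d * n) = (real d * real (a div d)) / (real d * real n)"
      by (subst a) simp
    also have "\<dots> = real (a div d) / real n" using assms by simp
    finally show ?thesis .
  qed
  then show ?thesis unfolding R_def by simp
qed

lemma gcd_scaled:
  assumes "d > 0" "d dvd a" "coprime n (a div d)"
  shows "gcd (d * n) a = (d::nat)"
proof -
  have "gcd (d * n) a = gcd (d * n) (d * (a div d))" using assms by simp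
  also have "\<dots> = d * gcd n (a div d)" by (simp add: gcd_mult_distrib_nat)
  also have "\<dots> = d" using assms by simp
  finally show ?thesis .
qed

lemma finite_star: "finite (ExcStarUpto b x)"
proof -
  have "ExcStarUpto b x \<subseteq> {..nat \<lceil>x\<rceil>}"
    unfolding ExcStarUpto_def by (auto simp: le_nat_iff intro: le_ceiling_iff[THEN iffD2]
        dest: order_trans[OF _ le_of_int_ceiling])
  then show ?thesis by (rule finite_subset) simp
qed

theorem lemma2p1:
  fixes a :: nat and N :: real
  assumes "a > 0" and "N > 0"
  shows "ExcUpto a N = (\<Union>d\<in>{d. d dvd a}. (\<lambda>n'. d * n') ` ExcStarUpto (a div d) (N / real d))
         \<and> E a N = (\<Sum>d\<in>{d. d dvd a}. EStar (a div d) (N / real d))"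
proof -
  have eq: "ExcUpto a N = (\<Union>d\<in>{d. d dvd a}. (\<lambda>n'. d * n') ` ExcStarUpto (a div d) (N / real d))"
  proof (rule set_eqI, rule iffI)
    fix n assume n: "n \<in> ExcUpto a N"
    define d where "d = gcd n a"
    have d0: "d > 0" using assms by (simp add: d_def)
    have dd: "d dvd a" "d dvd n" by (auto simp: d_def)
    define n' where "n' = n div d"
    have nn: "n = d * n'" using dd by (simp add: n'_def)
    have cop: "coprime n' (a div d)" unfolding n'_def d_def
      using assms by (intro div_gcd_coprime) auto
    have "n' > 0" using n nn by (auto simp: ExcUpto_def ExcSet_def)
    moreover have "R n' (a div d) = 0" using n nn R_scale[OF d0 dd(1), of n']
      by (auto simp: ExcUpto_def ExcSet_def)
    moreover have "real n' \<le> N / real d"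
    proof -
      have "real d * real n' \<le> N" using n nn by (auto simp: ExcUpto_def)
      then show ?thesis using d0 by (simp add: field_simps)
    qed
    ultimately have "n' \<in> ExcStarUpto (a div d) (N / real d)"
      using cop by (auto simp: ExcStarUpto_def ExcSetStar_def ExcSet_def)
    then show "n \<in> (\<Union>d\<in>{d. d dvd a}. (\<lambda>n'. d * n') ` ExcStarUpto (a div d) (N / real d))"
      using nn dd by blast
  next
    fix n assume "n \<in> (\<Union>d\<in>{d. d dvd a}. (\<lambda>n'. d * n') ` ExcStarUpto (a div d) (N / real d))"
    then obtain d n' where dd: "d dvd a" and nn: "n = d * n'"
      and n': "n' \<in> ExcStarUpto (a div d) (N / real d)" by blast
    have d0: "d > 0" using dd assms by (cases d) auto
    have "real n' \<le> N / real d" using n' by (simp add: ExcStarUpto_def)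
    then have "real d * real n' \<le> N" using d0 by (simp add: field_simps)
    then show "n \<in> ExcUpto a N" using n' nn R_scale[OF d0 dd, of n'] d0
      by (auto simp: ExcUpto_def ExcStarUpto_def ExcSetStar_def ExcSet_def)
  qed
  have fin: "finite {d. d dvd a}" using assms by simp
  have "E a N = card (\<Union>d\<in>{d. d dvd a}. (\<lambda>n'. d * n') ` ExcStarUpto (a div d) (N / real d))"
    unfolding E_def eq ..
  also have "\<dots> = (\<Sum>d\<in>{d. d dvd a}. card ((\<lambda>n'. d * n') ` ExcStarUpto (a div d) (N / real d)))"
  proof (rule card_UN_disjoint[OF fin])
    show "\<forall>i\<in>{d. d dvd a}. finite ((\<lambda>n'. i * n') ` ExcStarUpto (a div i) (N / real i))"
      using finite_star by blast
    show "\<forall>i\<in>{d. d dvd a}. \<forall>j\<in>{d. d dvd a}. i \<noteq> j \<longrightarrow>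
      (\<lambda>n'. i * n') ` ExcStarUpto (a div i) (N / real i) \<inter> (\<lambda>n'. j * n') ` ExcStarUpto (a div j) (N / real j) = {}"
    proof (intro ballI impI)
      fix i j assume i: "i \<in> {d. d dvd a}" and j: "j \<in> {d. d dvd a}" and ij: "i \<noteq> j"
      have i0: "i > 0" using i assms by (cases i) auto
      have j0: "j > 0" using j assms by (cases j) auto
      show "(\<lambda>n'. i * n') ` ExcStarUpto (a div i) (N / real i) \<inter> (\<lambda>n'. j * n') ` ExcStarUpto (a div j) (N / real j) = {}"
      proof (rule ccontr)
        assume "\<not> ?thesis"
        then obtain x y where x: "x \<in> ExcStarUpto (a div i) (N / real i)"
          and y: "y \<in> ExcStarUpto (a div j) (N / real j)" and xy: "i * x = j * y" by blast
        have "gcd (i * x) a = i" using gcd_scaled[OF i0 _, of a x] i x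
          by (auto simp: ExcStarUpto_def ExcSetStar_def)
        moreover have "gcd (j * y) a = j" using gcd_scaled[OF j0 _, of a y] j y
          by (auto simp: ExcStarUpto_def ExcSetStar_def)
        ultimately show False using xy ij by simp
      qed
    qed
  qed
  also have "\<dots> = (\<Sum>d\<in>{d. d dvd a}. EStar (a div d) (N / real d))"
  proof (rule sum.cong[OF refl])
    fix d assume "d \<in> {d. d dvd a}"
    then have "d > 0" using assms by (cases d) auto
    then have "inj_on (\<lambda>n'. d * n') (ExcStarUpto (a div d) (N / real d))"
      by (auto simp: inj_on_def)
    then show "card ((\<lambda>n'. d * n') ` ExcStarUpto (a div d) (N / real d)) = EStar (a div d) (N / real d)"
      by (simp add: card_image EStar_def)
  qed
  finally show ?thesis using eq by simp
qed

end
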